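(* Let $G$ be a finite group such that every element of prime order of $\mathrm{V}(\mathbb{Z}G)$ is rationally conjugate to an element of $G$ (i.e. for each such $u$ there are $g\in G$ and a unit $x\in\mathbb{Q}G$ with $x^{-1}ux=g$). Let $R$ be a field of characteristic zero, let $G\to \mathrm{GL}(n,R)$ be an injective group homomorphism, and let $\tau:\mathbb{Q}G\to M_n(R)$ be its unique extension to a ring homomorphism. Let $K$ be the kernel of the group homomorphism $\tau|_{\mathrm{U}(\mathbb{Q}G)}:\mathrm{U}(\mathbb{Q}G)\to\mathrm{GL}(n,R)$. Then $K\cap\mathrm{V}(\mathbb{Z}G)$ is torsion-free.
   Context: $\mathrm{U}(\mathbb{Q}G)$ denotes the unit group of the rational group algebra $\mathbb{Q}G$, and $\mathrm{V}(\mathbb{Z}G)$ the group of units of augmentation $1$ in $\mathbb{Z}G$ (augmentation of $\sum_g z_g g$ being $\sum_g z_g$). *)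

theory Defs
  imports "HOL-Algebra.Group" "Jordan_Normal_Form.Matrix"
begin

text \<open>Rational group algebra QG of a finite group G: functions carrier G -> rat,
  zero outside the carrier. ZG: those with integer coefficients.\<close>

definition QG :: "('a, 'b) monoid_scheme \<Rightarrow> ('a \<Rightarrow> rat) set" where
  "QG G = {a. \<forall>x. x \<notin> carrier G \<longrightarrow> a x = 0}"

definition ZG :: "('a, 'b) monoid_scheme \<Rightarrow> ('a \<Rightarrow> rat) set" where
  "ZG G = {a \<in> QG G. \<forall>x. a x \<in> \<int>}"

definition gr_mult :: "('a, 'b) monoid_scheme \<Rightarrow> ('a \<Rightarrow> rat) \<Rightarrow> ('a \<Rightarrow> rat) \<Rightarrow> ('a \<Rightarrow> rat)" where
  "gr_mult G a b = (\<lambda>x. if x \<in> carrier G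
      then (\<Sum>g\<in>carrier G. a g * b (inv\<^bsub>G\<^esub> g \<otimes>\<^bsub>G\<^esub> x)) else 0)"

definition gr_of :: "('a, 'b) monoid_scheme \<Rightarrow> 'a \<Rightarrow> ('a \<Rightarrow> rat)" where
  "gr_of G g = (\<lambda>x. if x = g then 1 else 0)"

definition gr_one :: "('a, 'b) monoid_scheme \<Rightarrow> ('a \<Rightarrow> rat)" where
  "gr_one G = gr_of G \<one>\<^bsub>G\<^esub>"

primrec gr_pow :: "('a, 'b) monoid_scheme \<Rightarrow> ('a \<Rightarrow> rat) \<Rightarrow> nat \<Rightarrow> ('a \<Rightarrow> rat)" where
  "gr_pow G a 0 = gr_one G"
| "gr_pow G a (Suc n) = gr_mult G (gr_pow G a n) a"

definition augmentation :: "('a, 'b) monoid_scheme \<Rightarrow> ('a \<Rightarrow> rat) \<Rightarrow> rat" where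
  "augmentation G a = (\<Sum>g\<in>carrier G. a g)"

definition UQG :: "('a, 'b) monoid_scheme \<Rightarrow> ('a \<Rightarrow> rat) set" where
  "UQG G = {a \<in> QG G. \<exists>b \<in> QG G. gr_mult G a b = gr_one G \<and> gr_mult G b a = gr_one G}"

definition VZG :: "('a, 'b) monoid_scheme \<Rightarrow> ('a \<Rightarrow> rat) set" where
  "VZG G = {a \<in> ZG G. (\<exists>b \<in> ZG G. gr_mult G a b = gr_one G \<and> gr_mult G b a = gr_one G)
              \<and> augmentation G a = 1}"

definition has_prime_order :: "('a, 'b) monoid_scheme \<Rightarrow> ('a \<Rightarrow> rat) \<Rightarrow> bool" where
  "has_prime_order G u \<longleftrightarrow> (\<exists>p::nat. prime p \<and> gr_pow G u p = gr_one G \<and> u \<noteq> gr_one G)"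

definition rationally_conj_to_group_elt :: "('a, 'b) monoid_scheme \<Rightarrow> ('a \<Rightarrow> rat) \<Rightarrow> bool" where
  "rationally_conj_to_group_elt G u \<longleftrightarrow>
     (\<exists>g \<in> carrier G. \<exists>x \<in> QG G. \<exists>y \<in> QG G.
        gr_mult G x y = gr_one G \<and> gr_mult G y x = gr_one G \<and>
        gr_mult G (gr_mult G y u) x = gr_of G g)"

definition tau :: "('a, 'b) monoid_scheme \<Rightarrow> nat \<Rightarrow> ('a \<Rightarrow> 'r::field_char_0 mat) \<Rightarrow> ('a \<Rightarrow> rat) \<Rightarrow> 'r mat" where
  "tau G n \<rho> a = mat n n (\<lambda>(i,j). \<Sum>g\<in>carrier G. of_rat (a g) * (\<rho> g $$ (i,j)))"

definition gr_torsion_free :: "('a, 'b) monoid_scheme \<Rightarrow> ('a \<Rightarrow> rat) set \<Rightarrow> bool" where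
  "gr_torsion_free G S \<longleftrightarrow> (\<forall>u \<in> S. \<forall>m::nat. m > 0 \<and> gr_pow G u m = gr_one G \<longrightarrow> u = gr_one G)"

end

theory Submission
  imports Defs "HOL-Computational_Algebra.Primes"
begin

lemma sum_reindex_cmult:
  fixes G (structure)
  assumes "group G" "g \<in> carrier G"
  shows "(\<Sum>h\<in>carrier G. f h) = (\<Sum>k\<in>carrier G. f (g \<otimes>\<^bsub>G\<^esub> k))"
proof -
  interpret group G by fact
  have "(\<lambda>k. g \<otimes> k) ` carrier G = carrier G"
  proof
    show "(\<lambda>k. g \<otimes> k) ` carrier G \<subseteq> carrier G" using assms by auto
    show "carrier G \<subseteq> (\<lambda>k. g \<otimes> k) ` carrier G"
    proof
      fix h assume h: "h \<in> carrier G"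
      have "h = g \<otimes> (inv g \<otimes> h)" using h assms by (simp add: m_assoc[symmetric])
      thus "h \<in> (\<lambda>k. g \<otimes> k) ` carrier G" using h assms by blast
    qed
  qed
  then have "sum f (carrier G) = sum f ((\<lambda>k. g \<otimes> k) ` carrier G)" by simp
  also have "\<dots> = sum (f \<circ> (\<lambda>k. g \<otimes> k)) (carrier G)"
    by (rule sum.reindex) (rule inj_on_cmult[OF assms(2)])
  finally show ?thesis by simp
qed

lemma gr_mult_assoc:
  fixes G (structure)
  assumes "group G"
  shows "gr_mult G (gr_mult G a b) c = gr_mult G a (gr_mult G b c)"
proof (rule ext)
  interpret group G by fact
  fix x
  show "gr_mult G (gr_mult G a b) c x = gr_mult G a (gr_mult G b c) x"
  proof (cases "x \<in> carrier G")
    case False thus ?thesis by (simp add: gr_mult_def)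
  next
    case x: True
    have "gr_mult G (gr_mult G a b) c x = (\<Sum>h\<in>carrier G. (\<Sum>g\<in>carrier G. a g * b (inv g \<otimes> h)) * c (inv h \<otimes> x))"
      using x by (simp add: gr_mult_def)
    also have "\<dots> = (\<Sum>g\<in>carrier G. \<Sum>h\<in>carrier G. a g * b (inv g \<otimes> h) * c (inv h \<otimes> x))"
      by (simp add: sum_distrib_right) (rule sum.swap)
    also have "\<dots> = (\<Sum>g\<in>carrier G. \<Sum>k\<in>carrier G. a g * b k * c (inv k \<otimes> (inv g \<otimes> x)))"
    proof (rule sum.cong[OF refl])
      fix g assume g: "g \<in> carrier G"
      show "(\<Sum>h\<in>carrier G. a g * b (inv g \<otimes> h) * c (inv h \<otimes> x)) = (\<Sum>k\<in>carrier G. a g * b k * c (inv k \<otimes> (inv g \<otimes> x)))"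
        apply (subst sum_reindex_cmult[OF assms g])
        apply (rule sum.cong[OF refl])
        using g x by (simp add: m_assoc[symmetric] inv_mult_group)
    qed
    also have "\<dots> = gr_mult G a (gr_mult G b c) x"
      using x by (simp add: gr_mult_def sum_distrib_left mult.assoc)
    finally show ?thesis .
  qed
qed

lemma gr_one_mult:
  fixes G (structure)
  assumes "group G" "a \<in> QG G" "finite (carrier G)"
  shows "gr_mult G (gr_one G) a = a"
proof (rule ext)
  interpret group G by fact
  fix x show "gr_mult G (gr_one G) a x = a x"
  proof (cases "x \<in> carrier G")
    case False thus ?thesis using assms(2) by (simp add: gr_mult_def QG_def)
  next
    case True
    have "gr_mult G (gr_one G) a x = (\<Sum>g\<in>carrier G. if g = \<one> then a (inv g \<otimes> x) else 0)"
      using True by (auto simp add: gr_mult_def gr_one_def gr_of_def intro!: sum.cong)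
    also have "\<dots> = a x" using True assms(3) by (simp add: sum.delta)
    finally show ?thesis .
  qed
qed

lemma gr_mult_one:
  fixes G (structure)
  assumes "group G" "a \<in> QG G" "finite (carrier G)"
  shows "gr_mult G a (gr_one G) = a"
proof (rule ext)
  interpret group G by fact
  fix x show "gr_mult G a (gr_one G) x = a x"
  proof (cases "x \<in> carrier G")
    case False thus ?thesis using assms(2) by (simp add: gr_mult_def QG_def)
  next
    case True
    have "gr_mult G a (gr_one G) x = (\<Sum>g\<in>carrier G. if g = x then a g else 0)"
    proof -
      have "\<And>g. g \<in> carrier G \<Longrightarrow> (inv g \<otimes> x = \<one>) = (g = x)"
        using True by (metis inv_comm inv_equality l_inv r_inv inv_closed)
      thus ?thesis using True by (auto simp add: gr_mult_def gr_one_def gr_of_def intro!: sum.cong)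
    qed
    also have "\<dots> = a x" using True assms(3) by (simp add: sum.delta')
    finally show ?thesis .
  qed
qed


lemma gr_mult_QG: "gr_mult G a b \<in> QG G"
  by (simp add: gr_mult_def QG_def)

lemma gr_one_QG: "group G \<Longrightarrow> gr_one G \<in> QG G"
  by (simp add: gr_one_def gr_of_def QG_def group.is_monoid monoid.one_closed)

lemma gr_one_ZG: "group G \<Longrightarrow> gr_one G \<in> ZG G"
  using gr_one_QG by (auto simp add: ZG_def gr_one_def gr_of_def)

lemma gr_pow_QG: "group G \<Longrightarrow> gr_pow G a k \<in> QG G"
  by (cases k) (auto simp: gr_one_QG gr_mult_QG)

lemma gr_mult_ZG: "a \<in> ZG G \<Longrightarrow> b \<in> ZG G \<Longrightarrow> gr_mult G a b \<in> ZG G"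
  using gr_mult_QG[of G a b] by (auto simp: ZG_def gr_mult_def intro!: Ints_sum Ints_mult)

lemma gr_pow_ZG: "group G \<Longrightarrow> a \<in> ZG G \<Longrightarrow> gr_pow G a k \<in> ZG G"
  by (induction k) (auto simp: gr_one_ZG gr_mult_ZG)

lemma gr_pow_1: "group G \<Longrightarrow> finite (carrier G) \<Longrightarrow> a \<in> QG G \<Longrightarrow> gr_pow G a 1 = a"
  by (simp add: gr_one_mult)

lemma gr_pow_add: "group G \<Longrightarrow> finite (carrier G) \<Longrightarrow> a \<in> QG G \<Longrightarrow>
   gr_pow G a (m + k) = gr_mult G (gr_pow G a m) (gr_pow G a k)"
proof (induction k)
  case 0 thus ?case by (simp add: gr_mult_one gr_pow_QG)
next
  case (Suc k) thus ?case by (simp add: gr_mult_assoc)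
qed

lemma gr_pow_mult: "group G \<Longrightarrow> finite (carrier G) \<Longrightarrow> a \<in> QG G \<Longrightarrow>
   gr_pow G a (m * k) = gr_pow G (gr_pow G a m) k"
proof (induction k)
  case 0 thus ?case by simp
next
  case (Suc k)
  have "gr_pow G a (m * Suc k) = gr_pow G a (m * k + m)" by (simp add: add.commute)
  also have "\<dots> = gr_mult G (gr_pow G a (m*k)) (gr_pow G a m)" using Suc.prems by (rule gr_pow_add)
  finally show ?case using Suc by simp
qed

lemma gr_pow_one: "group G \<Longrightarrow> finite (carrier G) \<Longrightarrow> gr_pow G (gr_one G) k = gr_one G"
  by (induction k) (auto simp: gr_mult_one gr_one_QG)

lemma aug_mult:
  fixes G (structure)
  assumes "group G" "finite (carrier G)"
  shows "augmentation G (gr_mult G a b) = augmentation G a * augmentation G b"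
proof -
  interpret group G by fact
  have "augmentation G (gr_mult G a b) = (\<Sum>x\<in>carrier G. \<Sum>g\<in>carrier G. a g * b (inv g \<otimes>\<^bsub>G\<^esub> x))"
    by (simp add: augmentation_def gr_mult_def)
  also have "\<dots> = (\<Sum>g\<in>carrier G. a g * (\<Sum>x\<in>carrier G. b (inv g \<otimes>\<^bsub>G\<^esub> x)))"
    by (simp add: sum_distrib_left) (rule sum.swap)
  also have "\<dots> = (\<Sum>g\<in>carrier G. a g * augmentation G b)"
  proof (rule sum.cong[OF refl])
    fix g assume g: "g \<in> carrier G"
    have "(\<Sum>x\<in>carrier G. b (inv g \<otimes>\<^bsub>G\<^esub> x)) = (\<Sum>k\<in>carrier G. b (inv g \<otimes>\<^bsub>G\<^esub> (g \<otimes>\<^bsub>G\<^esub> k)))"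
      by (rule sum_reindex_cmult[OF assms(1) g])
    also have "\<dots> = augmentation G b" using g
      by (simp add: augmentation_def m_assoc[symmetric])
    finally show "a g * (\<Sum>x\<in>carrier G. b (inv g \<otimes>\<^bsub>G\<^esub> x)) = a g * augmentation G b" by simp
  qed
  also have "\<dots> = augmentation G a * augmentation G b"
    by (simp add: augmentation_def sum_distrib_right)
  finally show ?thesis .
qed

lemma aug_one: "group G \<Longrightarrow> finite (carrier G) \<Longrightarrow> augmentation G (gr_one G) = 1"
  by (simp add: augmentation_def gr_one_def gr_of_def group.is_monoid monoid.one_closed)

lemma aug_pow: "group G \<Longrightarrow> finite (carrier G) \<Longrightarrow> augmentation G (gr_pow G a k) = augmentation G a ^ k"
  by (induction k) (auto simp: aug_one aug_mult)


lemma mat_mult_entry: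
  assumes "A \<in> carrier_mat n n" "B \<in> carrier_mat n n" "i < n" "j < n"
  shows "(A * B) $$ (i,j) = (\<Sum>k\<in>{0..<n}. A $$ (i,k) * B $$ (k,j))"
  using assms by (simp add: scalar_prod_def)

lemma tau_dim: "tau G n r a \<in> carrier_mat n n"
  by (simp add: tau_def)

lemma tau_entry: "i < n \<Longrightarrow> j < n \<Longrightarrow> tau G n r a $$ (i,j) = (\<Sum>g\<in>carrier G. of_rat (a g) * (r g $$ (i,j)))"
  by (simp add: tau_def)

lemma tau_mult:
  fixes G (structure) and r :: "'a \<Rightarrow> 'r::field_char_0 mat"
  assumes "group G" "finite (carrier G)"
    and rc: "\<forall>g \<in> carrier G. r g \<in> carrier_mat n n"
    and rm: "\<forall>g \<in> carrier G. \<forall>h \<in> carrier G. r (g \<otimes> h) = r g * r h"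
  shows "tau G n r (gr_mult G a b) = tau G n r a * tau G n r b"
proof (rule eq_matI)
  interpret group G by fact
  show "dim_row (tau G n r (gr_mult G a b)) = dim_row (tau G n r a * tau G n r b)"
    by (simp add: tau_def)
  show "dim_col (tau G n r (gr_mult G a b)) = dim_col (tau G n r a * tau G n r b)"
    by (simp add: tau_def)
  fix i j assume "i < dim_row (tau G n r a * tau G n r b)" "j < dim_col (tau G n r a * tau G n r b)"
  hence ij: "i < n" "j < n" by (auto simp: tau_def)
  have "tau G n r (gr_mult G a b) $$ (i,j) =
     (\<Sum>x\<in>carrier G. of_rat (\<Sum>g\<in>carrier G. a g * b (inv g \<otimes> x)) * r x $$ (i,j))"
    using ij by (simp add: tau_entry gr_mult_def)
  also have "\<dots> = (\<Sum>x\<in>carrier G. \<Sum>g\<in>carrier G. of_rat (a g) * of_rat (b (inv g \<otimes> x)) * r x $$ (i,j))"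
    by (simp add: of_rat_sum of_rat_mult sum_distrib_right)
  also have "\<dots> = (\<Sum>g\<in>carrier G. \<Sum>x\<in>carrier G. of_rat (a g) * of_rat (b (inv g \<otimes> x)) * r x $$ (i,j))"
    by (rule sum.swap)
  also have "\<dots> = (\<Sum>g\<in>carrier G. \<Sum>h\<in>carrier G. of_rat (a g) * of_rat (b h) * r (g \<otimes> h) $$ (i,j))"
  proof (rule sum.cong[OF refl])
    fix g assume g: "g \<in> carrier G"
    show "(\<Sum>x\<in>carrier G. of_rat (a g) * of_rat (b (inv g \<otimes> x)) * r x $$ (i,j)) =
       (\<Sum>h\<in>carrier G. of_rat (a g) * of_rat (b h) * r (g \<otimes> h) $$ (i,j))"
      using g by (subst sum_reindex_cmult[OF assms(1) g]) (simp add: m_assoc[symmetric])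
  qed
  also have "\<dots> = (\<Sum>g\<in>carrier G. \<Sum>h\<in>carrier G. \<Sum>k\<in>{0..<n}.
        (of_rat (a g) * r g $$ (i,k)) * (of_rat (b h) * r h $$ (k,j)))"
  proof (intro sum.cong refl)
    fix g h assume g: "g \<in> carrier G" and h: "h \<in> carrier G"
    have "r (g \<otimes> h) $$ (i,j) = (\<Sum>k\<in>{0..<n}. r g $$ (i,k) * r h $$ (k,j))"
      using g h rc rm ij by (simp add: mat_mult_entry)
    thus "of_rat (a g) * of_rat (b h) * r (g \<otimes> h) $$ (i,j) =
      (\<Sum>k\<in>{0..<n}. (of_rat (a g) * r g $$ (i,k)) * (of_rat (b h) * r h $$ (k,j)))"
      by (simp add: sum_distrib_left mult_ac)
  qed
  also have "\<dots> = (\<Sum>k\<in>{0..<n}. \<Sum>g\<in>carrier G. \<Sum>h\<in>carrier G.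
        (of_rat (a g) * r g $$ (i,k)) * (of_rat (b h) * r h $$ (k,j)))"
    by (subst sum.swap) (simp add: sum.swap[of _ "carrier G" "{0..<n}"])
  also have "\<dots> = (\<Sum>k\<in>{0..<n}. tau G n r a $$ (i,k) * tau G n r b $$ (k,j))"
    by (rule sum.cong[OF refl]) (simp add: tau_entry ij sum_product)
  also have "\<dots> = (tau G n r a * tau G n r b) $$ (i,j)"
    using mat_mult_entry[OF tau_dim[of G n r a] tau_dim[of G n r b] ij] by simp
  finally show "tau G n r (gr_mult G a b) $$ (i,j) = (tau G n r a * tau G n r b) $$ (i,j)" .
qed

lemma of_rat_if_mult: "(of_rat (if P then 1 else 0) :: 'c::field_char_0) * x = (if P then x else 0)" by simp

lemma tau_of:
  assumes "g \<in> carrier G" "r g \<in> carrier_mat n n" "finite (carrier G)"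
  shows "tau G n r (gr_of G g) = r g"
proof (rule eq_matI)
  fix i j assume ij: "i < dim_row (r g)" "j < dim_col (r g)"
  have "tau G n r (gr_of G g) $$ (i,j) = (\<Sum>h\<in>carrier G. if h = g then r h $$ (i,j) else 0)"
  proof -
    show ?thesis using ij assms by (simp add: tau_entry gr_of_def of_rat_if_mult)
  qed
  also have "\<dots> = r g $$ (i,j)" using assms by simp
  finally show "tau G n r (gr_of G g) $$ (i,j) = r g $$ (i,j)" .
qed (use assms in \<open>auto simp: tau_def\<close>)


lemma tau_pow:
  fixes G (structure) and r :: "'a \<Rightarrow> 'r::field_char_0 mat"
  assumes "group G" "finite (carrier G)"
    and rc: "\<forall>g \<in> carrier G. r g \<in> carrier_mat n n"
    and rm: "\<forall>g \<in> carrier G. \<forall>h \<in> carrier G. r (g \<otimes> h) = r g * r h"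
    and r1: "r \<one> = 1\<^sub>m n"
    and t: "tau G n r u = 1\<^sub>m n"
  shows "tau G n r (gr_pow G u k) = 1\<^sub>m n"
proof (induction k)
  case 0
  have "\<one> \<in> carrier G" using assms(1) by (simp add: group.is_monoid monoid.one_closed)
  thus ?case using tau_of[of "\<one>" G r n] rc assms(2) r1 by (simp add: gr_one_def)
next
  case (Suc k)
  thus ?case using tau_mult[OF assms(1-4)] t by simp
qed

lemma reduce_prime:
  assumes grp: "group G" and fin: "finite (carrier G)"
    and Pp: "\<And>u k. P u \<Longrightarrow> P (gr_pow G u k)"
    and PZ: "\<And>u. P u \<Longrightarrow> u \<in> QG G"
  shows "P u \<Longrightarrow> m > 0 \<Longrightarrow> gr_pow G u m = gr_one G \<Longrightarrow> u \<noteq> gr_one G \<Longrightarrow>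
     \<exists>v. P v \<and> (\<exists>p::nat. prime p \<and> gr_pow G v p = gr_one G \<and> v \<noteq> gr_one G)"
proof (induction m arbitrary: u rule: less_induct)
  case (less m)
  show ?case
  proof (cases "prime m")
    case True thus ?thesis using less.prems by blast
  next
    case np: False
    have "m \<noteq> 1" using less.prems gr_pow_1[OF grp fin PZ[OF less.prems(1)]] by auto
    hence m1: "m > 1" using less.prems(2) by simp
    then obtain a where a: "a dvd m" "a \<noteq> 1" "a \<noteq> m" using np prime_nat_iff by blast
    then obtain b where b: "m = a * b" by blast
    have "a > 1" using a b m1 by (cases a) auto
    have "b \<noteq> 0" using b m1 by (cases "b = 0") auto
    have "b \<noteq> 1" using a b by auto
    have "b > 1" using \<open>b \<noteq> 0\<close> \<open>b \<noteq> 1\<close> by linarith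
    have am: "a < m" using \<open>b > 1\<close> \<open>a > 1\<close> b by simp
    have bm: "b < m" using \<open>b > 1\<close> \<open>a > 1\<close> b by simp
    show ?thesis
    proof (cases "gr_pow G u a = gr_one G")
      case True
      thus ?thesis using less.IH[OF am less.prems(1)] \<open>a > 1\<close> less.prems(4) by auto
    next
      case False
      have "gr_pow G (gr_pow G u a) b = gr_one G"
        using gr_pow_mult[OF grp fin PZ[OF less.prems(1)], of a b] b less.prems(3) by simp
      thus ?thesis using less.IH[OF bm Pp[OF less.prems(1)]] \<open>b > 1\<close> False by auto
    qed
  qed
qed


theorem mainTheorem8:
  fixes G :: "('a, 'b) monoid_scheme"
    and n :: nat
    and \<rho> :: "'a \<Rightarrow> 'r::field_char_0 mat"
  assumes "group G"
    and "finite (carrier G)"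
    and "\<forall>u \<in> VZG G. has_prime_order G u \<longrightarrow> rationally_conj_to_group_elt G u"
    and "\<forall>g \<in> carrier G. \<rho> g \<in> carrier_mat n n \<and> invertible_mat (\<rho> g)"
    and "\<forall>g \<in> carrier G. \<forall>h \<in> carrier G. \<rho> (g \<otimes>\<^bsub>G\<^esub> h) = \<rho> g * \<rho> h"
    and "inj_on \<rho> (carrier G)"
  shows "gr_torsion_free G ({u \<in> UQG G. tau G n \<rho> u = 1\<^sub>m n} \<inter> VZG G)"
proof -
  note grp = assms(1) and fin = assms(2) and conj = assms(3) and rm = assms(5) and inj = assms(6)
  have rc: "\<forall>g \<in> carrier G. \<rho> g \<in> carrier_mat n n" using assms(4) by blast
  have one_c: "\<one>\<^bsub>G\<^esub> \<in> carrier G" using grp by (simp add: group.is_monoid monoid.one_closed)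
  have r1: "\<rho> \<one>\<^bsub>G\<^esub> = 1\<^sub>m n"
  proof -
    let ?A = "\<rho> \<one>\<^bsub>G\<^esub>"
    have A: "?A \<in> carrier_mat n n" "invertible_mat ?A" using assms(4) one_c by auto
    then obtain B where B1: "?A * B = 1\<^sub>m n" and B2: "B * ?A = 1\<^sub>m (dim_row B)"
      unfolding invertible_mat_def inverts_mat_def by auto
    have "dim_col B = n" using B1 by (metis index_mult_mat(3) index_one_mat(3))
    moreover have "dim_row B = n" using B2 A(1) by (metis carrier_matD(2) index_mult_mat(3) index_one_mat(3))
    ultimately have Bc: "B \<in> carrier_mat n n" by auto
    have AA: "?A * ?A = ?A" using rm one_c by (metis group.is_monoid grp monoid.l_one)
    have "?A = ?A * (?A * B)" using B1 A(1) by simp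
    also have "\<dots> = (?A * ?A) * B" using A(1) Bc by (simp add: assoc_mult_mat)
    also have "\<dots> = 1\<^sub>m n" using AA B1 by simp
    finally show ?thesis .
  qed
  have tone: "tau G n \<rho> (gr_one G) = 1\<^sub>m n"
    using tau_of[of "\<one>\<^bsub>G\<^esub>" G \<rho> n] rc one_c fin r1 by (simp add: gr_one_def)
  have tm: "\<And>a b. tau G n \<rho> (gr_mult G a b) = tau G n \<rho> a * tau G n \<rho> b"
    by (rule tau_mult[OF grp fin rc rm])
  define P where "P u \<longleftrightarrow> u \<in> ZG G \<and> augmentation G u = 1 \<and> tau G n \<rho> u = 1\<^sub>m n" for u
  have Pp: "\<And>u k. P u \<Longrightarrow> P (gr_pow G u k)"
    unfolding P_def using gr_pow_ZG[OF grp] aug_pow[OF grp fin] tau_pow[OF grp fin rc rm r1] by auto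
  have PZ: "\<And>u. P u \<Longrightarrow> u \<in> QG G" unfolding P_def ZG_def by auto
  have noprime: False if Pv: "P v" and p: "prime p" and vp: "gr_pow G v p = gr_one G"
     and v1: "v \<noteq> gr_one G" for v p
  proof -
    have vQ: "v \<in> QG G" using PZ Pv by blast
    have vV: "v \<in> VZG G"
    proof -
      let ?b = "gr_pow G v (p - 1)"
      have bZ: "?b \<in> ZG G" using Pv gr_pow_ZG[OF grp] unfolding P_def by blast
      have p1: "p = 1 + (p - 1)" "p = Suc (p - 1)" using p prime_gt_0_nat by auto
      have "gr_mult G v ?b = gr_one G"
        using gr_pow_add[OF grp fin vQ, of 1 "p - 1"] gr_pow_1[OF grp fin vQ] vp p1(1) by simp
      moreover have "gr_mult G ?b v = gr_one G" using vp p1(2) by (metis gr_pow.simps(2))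
      ultimately show ?thesis using bZ Pv unfolding VZG_def P_def by blast
    qed
    have "has_prime_order G v" unfolding has_prime_order_def using p vp v1 by blast
    then obtain g x y where g: "g \<in> carrier G" and xQ: "x \<in> QG G" and yQ: "y \<in> QG G"
      and xy: "gr_mult G x y = gr_one G" and yx: "gr_mult G y x = gr_one G"
      and c: "gr_mult G (gr_mult G y v) x = gr_of G g"
      using conj vV unfolding rationally_conj_to_group_elt_def by blast
    have "\<rho> g = tau G n \<rho> (gr_of G g)" using tau_of[of g G \<rho> n] g rc fin by simp
    also have "\<dots> = tau G n \<rho> y * tau G n \<rho> v * tau G n \<rho> x" using c tm by metis
    also have "\<dots> = tau G n \<rho> y * tau G n \<rho> x" using Pv tau_dim[of G n \<rho> y] unfolding P_def by simp
    also have "\<dots> = 1\<^sub>m n" using tm[of y x] yx tone by simp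
    finally have "\<rho> g = \<rho> \<one>\<^bsub>G\<^esub>" using r1 by simp
    hence "g = \<one>\<^bsub>G\<^esub>" using inj g one_c by (meson inj_onD)
    hence c1: "gr_mult G (gr_mult G y v) x = gr_one G" using c by (simp add: gr_one_def)
    have "v = gr_mult G (gr_one G) (gr_mult G v (gr_one G))"
      using vQ gr_one_QG[OF grp] gr_one_mult[OF grp _ fin] gr_mult_one[OF grp vQ fin] by simp
    also have "\<dots> = gr_mult G x (gr_mult G (gr_mult G (gr_mult G y v) x) y)"
      by (simp only: gr_mult_assoc[OF grp] xy[symmetric])
    also have "\<dots> = gr_one G" using c1 xy gr_one_mult[OF grp yQ fin] by simp
    finally show False using v1 by simp
  qed
  show ?thesis unfolding gr_torsion_free_def
  proof (intro ballI allI impI)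
    fix u m assume u: "u \<in> {u \<in> UQG G. tau G n \<rho> u = 1\<^sub>m n} \<inter> VZG G"
      and m: "0 < m \<and> gr_pow G u m = gr_one G"
    have "P u" using u unfolding P_def VZG_def by auto
    show "u = gr_one G"
    proof (rule ccontr)
      assume "u \<noteq> gr_one G"
      then obtain v p where "P v" "prime p" "gr_pow G v p = gr_one G" "v \<noteq> gr_one G"
        using reduce_prime[OF grp fin, of P, OF Pp PZ \<open>P u\<close>] m by blast
      thus False using noprime by blast
    qed
  qed
qed

end
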